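(* Consider a tranca mínima (as defined in the context), and let $k\in\{1,2,3,4,5,6\}$. If neither of the two players of the losing team has, in their initial hand, any tile containing the number $0$ or the number $k$, then at least one of the two players of the losing team places at least one tile during the game.
   Context: Domino tiles: the set of tiles consists of the 28 unordered pairs $[a,b]=[b,a]$ with $a,b\in\{0,1,\dots,6\}$; the number of points (pips) of $[a,b]$ is $a+b$. Four players, numbered 1 to 4, play; players 1 and 3 form one team and players 2 and 4 the other. The 28 tiles are dealt, 7 to each player (the initial hands). Players take turns in cyclic order $1,2,3,4,1,\dots$. The starting player places any one of their tiles on the table, forming a line of tiles (the board) with two open ends. On each subsequent turn, the player whose turn it is must, if they hold a tile containing a number equal to the number shown at one of the two open ends, place such a tile at that end (with equal numbers adjacent), the other number of the tile becoming the new open end; if they hold no such tile, they pass. A game ends either when a player places their last tile, or in a tranca (blocked game): a position in which no player holds a tile that can be placed. In a game ending in a tranca, the team whose two players' remaining tiles have the smaller total number of pips wins, and the other team is the losing team. A tranca mínima is a game ending in a tranca in which the total number of pips on the tiles of the board at the end of the game is $42$. *)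

theory Defs
  imports Main
begin

text \<open>A tile [a,b] is represented by the normalized pair (a,b) with a \<le> b \<le> 6.\<close>
type_synonym tile = "nat \<times> nat"

definition all_tiles :: "tile set" where
  "all_tiles = {(a, b). a \<le> b \<and> b \<le> 6}"

definition pips :: "tile \<Rightarrow> nat" where
  "pips t = fst t + snd t"

definition matches :: "tile \<Rightarrow> nat \<Rightarrow> bool" where
  "matches t x \<longleftrightarrow> fst t = x \<or> snd t = x"

definition other :: "tile \<Rightarrow> nat \<Rightarrow> nat" where
  "other t x = (if fst t = x then snd t else fst t)"

definition players :: "nat set" where
  "players = {1, 2, 3, 4}"

definition deal :: "(nat \<Rightarrow> tile set) \<Rightarrow> bool" where
  "deal H \<longleftrightarrow> (\<forall>p\<in>players. H p \<subseteq> all_tiles \<and> card (H p) = 7)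
      \<and> (\<forall>p\<in>players. \<forall>q\<in>players. p \<noteq> q \<longrightarrow> H p \<inter> H q = {})
      \<and> (\<Union>p\<in>players. H p) = all_tiles"

text \<open>A move: pass, or place a tile; the boolean says at which open end
  (True = left end, False = right end); it is irrelevant for the very first tile.\<close>
datatype move = Pass | Place tile bool

text \<open>Game state: current hands, open ends of the board (None = empty board),
  list of tiles on the board.\<close>
type_synonym state = "(nat \<Rightarrow> tile set) \<times> (nat \<times> nat) option \<times> tile list"

definition can_play :: "tile set \<Rightarrow> nat \<Rightarrow> nat \<Rightarrow> bool" where
  "can_play h l r \<longleftrightarrow> (\<exists>t\<in>h. matches t l \<or> matches t r)"

definition legal :: "nat \<Rightarrow> state \<Rightarrow> move \<Rightarrow> bool" where
  "legal p s m = (case s of (H, E, B) \<Rightarrow>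
     (case E of
        None \<Rightarrow> (\<exists>t b. m = Place t b \<and> t \<in> H p)
      | Some (l, r) \<Rightarrow>
          (if can_play (H p) l r
           then (\<exists>t. (m = Place t True \<and> t \<in> H p \<and> matches t l)
                    \<or> (m = Place t False \<and> t \<in> H p \<and> matches t r))
           else m = Pass)))"

definition apply_move :: "nat \<Rightarrow> move \<Rightarrow> state \<Rightarrow> state" where
  "apply_move p m s = (case s of (H, E, B) \<Rightarrow>
     (case m of
        Pass \<Rightarrow> (H, E, B)
      | Place t left \<Rightarrow>
          (H(p := H p - {t}),
           (case E of
              None \<Rightarrow> Some (fst t, snd t)
            | Some (l, r) \<Rightarrow> (if left then Some (other t l, r) else Some (l, other t r))),
           B @ [t])))"

definition blocked :: "state \<Rightarrow> bool" where
  "blocked s = (case s of (H, E, B) \<Rightarrow>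
     (\<exists>l r. E = Some (l, r) \<and> (\<forall>p\<in>players. \<not> can_play (H p) l r)))"

definition someone_out :: "state \<Rightarrow> bool" where
  "someone_out s = (case s of (H, E, B) \<Rightarrow> (\<exists>p\<in>players. H p = {}))"

definition game_over :: "state \<Rightarrow> bool" where
  "game_over s \<longleftrightarrow> someone_out s \<or> blocked s"

definition player :: "nat \<Rightarrow> nat" where
  "player i = i mod 4 + 1"

fun run_from :: "nat \<Rightarrow> state \<Rightarrow> move list \<Rightarrow> state" where
  "run_from i s [] = s"
| "run_from i s (m # ms) = run_from (Suc i) (apply_move (player i) m s) ms"

fun valid_from :: "nat \<Rightarrow> state \<Rightarrow> move list \<Rightarrow> bool" where
  "valid_from i s [] = True"
| "valid_from i s (m # ms) \<longleftrightarrow> \<not> game_over s \<and> legal (player i) s m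
      \<and> valid_from (Suc i) (apply_move (player i) m s) ms"

definition init_state :: "(nat \<Rightarrow> tile set) \<Rightarrow> state" where
  "init_state H = (H, None, [])"

definition final_state :: "(nat \<Rightarrow> tile set) \<Rightarrow> move list \<Rightarrow> state" where
  "final_state H ms = run_from 0 (init_state H) ms"

definition complete_game :: "(nat \<Rightarrow> tile set) \<Rightarrow> move list \<Rightarrow> bool" where
  "complete_game H ms \<longleftrightarrow> deal H \<and> valid_from 0 (init_state H) ms
      \<and> game_over (final_state H ms)"

definition ends_in_tranca :: "(nat \<Rightarrow> tile set) \<Rightarrow> move list \<Rightarrow> bool" where
  "ends_in_tranca H ms \<longleftrightarrow> complete_game H ms
      \<and> blocked (final_state H ms) \<and> \<not> someone_out (final_state H ms)"

definition board_pips :: "state \<Rightarrow> nat" where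
  "board_pips s = (case s of (H, E, B) \<Rightarrow> sum_list (map pips B))"

definition tranca_minima :: "(nat \<Rightarrow> tile set) \<Rightarrow> move list \<Rightarrow> bool" where
  "tranca_minima H ms \<longleftrightarrow> ends_in_tranca H ms \<and> board_pips (final_state H ms) = 42"

definition teams :: "nat set set" where
  "teams = {{1, 3}, {2, 4}}"

definition team_pips :: "state \<Rightarrow> nat set \<Rightarrow> nat" where
  "team_pips s T = (case s of (H, E, B) \<Rightarrow> (\<Sum>p\<in>T. \<Sum>t\<in>H p. pips t))"

definition losing_team :: "(nat \<Rightarrow> tile set) \<Rightarrow> move list \<Rightarrow> nat set \<Rightarrow> bool" where
  "losing_team H ms T \<longleftrightarrow> T \<in> teams
      \<and> team_pips (final_state H ms) T > team_pips (final_state H ms) (players - T)"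

end

theory Submission
  imports Defs
begin

definition L :: "tile list" where
 "L = [(0,0),(0,1),(0,2),(0,3),(0,4),(0,5),(0,6),(1,1),(1,2),(1,3),(1,4),(1,5),(1,6),(2,2),(2,3),(2,4),(2,5),(2,6),(3,3),(3,4),(3,5),(3,6),(4,4),(4,5),(4,6),(5,5),(5,6),(6,6)]"

lemma distinct_L: "distinct L" by (simp add: L_def)

lemma all_tiles_L: "all_tiles = set L"
proof
  show "set L \<subseteq> all_tiles" by (auto simp: L_def all_tiles_def)
  show "all_tiles \<subseteq> set L"
  proof
    fix t assume "t \<in> all_tiles"
    then obtain a b where t: "t = (a,b)" "a \<le> b" "b \<le> 6" by (auto simp: all_tiles_def)
    have "b \<in> {0,1,2,3,4,5,6}" "a \<in> {0,1,2,3,4,5,6}" using t by auto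
    then show "t \<in> set L" using t unfolding L_def by (simp, elim disjE, simp_all)
  qed
qed

lemma filt_set: "{t\<in>all_tiles. P t} = set (filter P L)"
  by (auto simp: all_tiles_L)

lemma sum_filt: "(\<Sum>t\<in>{t\<in>all_tiles. P t}. f t) = sum_list (map f (filter P L))"
  unfolding filt_set by (simp add: sum_list_distinct_conv_sum_set distinct_L)

lemma card_filt: "card {t\<in>all_tiles. P t} = length (filter P L)"
  unfolding filt_set by (rule distinct_card[OF distinct_filter[OF distinct_L]])

definition cv :: "nat \<Rightarrow> tile \<Rightarrow> nat" where
  "cv v t = of_bool (fst t = v) + of_bool (snd t = v)"

definition occ :: "nat \<Rightarrow> tile set \<Rightarrow> nat" where
  "occ v A = (\<Sum>t\<in>A. cv v t)"

definition Sk :: "nat \<Rightarrow> tile set" where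
  "Sk k = {t\<in>all_tiles. \<not> matches t 0 \<and> \<not> matches t k}"

lemma six: "{1..6::nat} = {1,2,3,4,5,6}" by auto

lemma finite_all: "finite all_tiles" by (simp add: all_tiles_L)

lemma pips_cv0: "\<forall>t\<in>set L. pips t = (\<Sum>v\<in>{1..6}. v * cv v t)"
  unfolding six L_def by (simp add: pips_def cv_def)

lemma pips_cv: "t \<in> all_tiles \<Longrightarrow> pips t = (\<Sum>v\<in>{1..6}. v * cv v t)"
  using pips_cv0 all_tiles_L by auto

lemma nz_le0: "\<forall>t\<in>set L. (\<Sum>v\<in>{1..6}. cv v t) \<le> 2"
  unfolding six L_def by (simp add: cv_def)

lemma nz_le: "t \<in> all_tiles \<Longrightarrow> (\<Sum>v\<in>{1..6}. cv v t) \<le> 2"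
  using nz_le0 all_tiles_L by auto

lemma pips_occ: assumes "A \<subseteq> all_tiles" shows "sum pips A = (\<Sum>v\<in>{1..6}. v * occ v A)"
proof -
  have "sum pips A = (\<Sum>t\<in>A. \<Sum>v\<in>{1..6}. v * cv v t)"
    using assms pips_cv by (intro sum.cong) auto
  also have "\<dots> = (\<Sum>v\<in>{1..6}. \<Sum>t\<in>A. v * cv v t)" by (rule sum.swap)
  also have "\<dots> = (\<Sum>v\<in>{1..6}. v * occ v A)" by (simp add: occ_def sum_distrib_left)
  finally show ?thesis .
qed

lemma occ_mono: "finite B \<Longrightarrow> A \<subseteq> B \<Longrightarrow> occ v A \<le> occ v B"
  unfolding occ_def by (rule sum_mono2) auto

lemma occ_ge1: "finite B \<Longrightarrow> t \<in> B \<Longrightarrow> cv v t \<le> occ v B"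
  unfolding occ_def by (rule member_le_sum) auto

lemma occ_card: assumes "finite B" shows "card {t\<in>B. matches t v} \<le> occ v B"
proof -
  have "card {t\<in>B. matches t v} = (\<Sum>t\<in>{t\<in>B. matches t v}. 1)" by simp
  also have "\<dots> \<le> (\<Sum>t\<in>{t\<in>B. matches t v}. cv v t)"
    by (rule sum_mono) (auto simp: cv_def matches_def)
  also have "\<dots> \<le> occ v B" unfolding occ_def using assms by (intro sum_mono2) auto
  finally show ?thesis .
qed

lemma kcases: "(k::nat) \<in> {1..6} \<Longrightarrow> k = 1 \<or> k = 2 \<or> k = 3 \<or> k = 4 \<or> k = 5 \<or> k = 6" by auto

lemma tile_in: "a \<le> b \<Longrightarrow> b \<le> 6 \<Longrightarrow> (a,b) \<in> all_tiles"
  by (simp add: all_tiles_def)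

lemma Zsum0: "(\<Sum>t\<leftarrow>filter (\<lambda>t. matches t 0) L. \<Sum>v\<in>{1,2,3,4,5,6::nat}. cv v t) = 6"
  by (simp add: L_def matches_def cv_def)

lemma Zsum: "(\<Sum>t\<in>{t\<in>all_tiles. matches t 0}. \<Sum>v\<in>{1..6::nat}. cv v t) = 6"
  unfolding sum_filt six by (rule Zsum0)

lemma final_comb:
  fixes Bs :: "tile set" and k l r :: nat
  assumes k: "k \<in> {1..6}" and sub: "Bs \<subseteq> all_tiles"
    and l: "l \<in> {0,k}" and r: "r \<in> {0,k}"
    and all: "\<forall>t\<in>all_tiles. matches t l \<or> matches t r \<longrightarrow> t \<in> Bs"
    and par: "\<forall>v. even (occ v Bs + of_bool (l = v) + of_bool (r = v))"
    and c1: "card (Bs \<inter> Sk k) \<le> 1"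
    and s: "sum pips Bs = 42"
  shows False
proof -
  have fin: "finite Bs" using sub finite_all finite_subset by blast
  have po: "(\<Sum>v\<in>{1..6}. v * occ v Bs) = 42" using pips_occ[OF sub] s by simp
  have lb: "(\<Sum>v\<in>{1..6::nat}. v * g v) \<le> 42" if "\<forall>v\<in>{1..6}. g v \<le> occ v Bs" for g
  proof -
    have "(\<Sum>v\<in>{1..6::nat}. v * g v) \<le> (\<Sum>v\<in>{1..6}. v * occ v Bs)"
      using that by (intro sum_mono) auto
    then show ?thesis using po by simp
  qed
  show False
  proof (cases "l = r")
    case False
    then have lr: "{l, r} = {0, k}" using l r by auto
    have ZK: "{t\<in>all_tiles. matches t 0 \<or> matches t k} \<subseteq> Bs" using all lr by auto
    have "sum pips {t\<in>all_tiles. matches t 0 \<or> matches t k} \<le> sum pips Bs"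
      using ZK fin by (intro sum_mono2) auto
    moreover have "sum pips {t\<in>all_tiles. matches t 0 \<or> matches t k} > 42"
      unfolding sum_filt using kcases[OF k] by (auto simp: L_def matches_def pips_def)
    ultimately show False using s by simp
  next
    case True
    then have "l = r \<and> (l = 0 \<or> l = k)" using l by auto
    then show False
    proof (elim conjE disjE)
      assume lr: "l = r" "l = k"
      have K: "{t\<in>all_tiles. matches t k} \<subseteq> Bs" using all lr by auto
      have "occ k {t\<in>all_tiles. matches t k} = 8"
        unfolding occ_def sum_filt using kcases[OF k] by (auto simp: L_def matches_def cv_def)
      then have ok: "occ k Bs \<ge> 8" using occ_mono[OF fin K, of k] by simp
      have ov: "occ v Bs \<ge> 2" if "v \<in> {1..6}" "v \<noteq> k" for v
      proof -
        have "(min k v, max k v) \<in> all_tiles" using that k by (intro tile_in) auto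
        moreover have "matches (min k v, max k v) k" by (auto simp: matches_def min_def max_def)
        ultimately have "(min k v, max k v) \<in> Bs" using K by auto
        then have "cv v (min k v, max k v) \<le> occ v Bs" by (rule occ_ge1[OF fin])
        moreover have "cv v (min k v, max k v) = 1" using that by (auto simp: cv_def min_def max_def)
        moreover have "even (occ v Bs)" using par[rule_format, of v] lr that by simp
        ultimately show ?thesis by presburger
      qed
      have "(\<Sum>v\<in>{1..6::nat}. v * (if v = k then 8 else 2)) \<le> 42"
        using ok ov by (intro lb) auto
      then have "(\<Sum>v\<in>{1,2,3,4,5,6::nat}. v * (if v = k then 8 else 2)) \<le> 42" by (simp only: six)
      then show False using kcases[OF k] by auto
    next
      assume lr: "l = r" "l = 0"
      have Z: "{t\<in>all_tiles. matches t 0} \<subseteq> Bs" using all lr by auto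
      have ov: "occ v Bs \<ge> 2" if "v \<in> {1..6}" for v
      proof -
        have "(0, v) \<in> all_tiles" using that by (intro tile_in) auto
        moreover have "matches (0, v) 0" by (auto simp: matches_def)
        ultimately have "(0, v) \<in> Bs" using Z by auto
        then have "cv v (0, v) \<le> occ v Bs" by (rule occ_ge1[OF fin])
        moreover have "cv v (0, v) = 1" using that by (auto simp: cv_def)
        moreover have "even (occ v Bs)" using par[rule_format, of v] lr that by simp
        ultimately show ?thesis by presburger
      qed
      define K where "K = {t\<in>Bs. matches t k}"
      have cK: "card K \<le> occ k Bs" unfolding K_def by (rule occ_card[OF fin])
      show False
      proof (cases "card K \<ge> 3")
        case True
        have "even (occ k Bs)" using par[rule_format, of k] lr k by auto
        then have ok: "occ k Bs \<ge> 4" using cK True by presburger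
        have "(\<Sum>v\<in>{1..6::nat}. v * (if v = k then 4 else 2)) \<le> 42"
          using ok ov by (intro lb) auto
        then have "(\<Sum>v\<in>{1,2,3,4,5,6::nat}. v * (if v = k then 4 else 2)) \<le> 42" by (simp only: six)
      then show False using kcases[OF k] by auto
      next
        case False
        define Z where "Z = {t\<in>all_tiles. matches t 0}"
        define nz where "nz t = (\<Sum>v\<in>{1..6::nat}. cv v t)" for t
        have "(\<Sum>v\<in>{1..6::nat}. 2) \<le> (\<Sum>v\<in>{1..6}. occ v Bs)"
          using ov by (intro sum_mono) auto
        then have g12: "12 \<le> (\<Sum>v\<in>{1..6}. occ v Bs)" by simp
        have "(\<Sum>v\<in>{1..6}. occ v Bs) = (\<Sum>t\<in>Bs. nz t)"
          unfolding occ_def nz_def by (rule sum.swap)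
        also have "\<dots> = (\<Sum>t\<in>Z. nz t) + (\<Sum>t\<in>Bs - Z. nz t)"
          unfolding Z_def using sum.subset_diff[OF Z fin, of nz] by simp
        also have "(\<Sum>t\<in>Z. nz t) = 6"
          unfolding Z_def nz_def by (rule Zsum)
        also have "(\<Sum>t\<in>Bs - Z. nz t) \<le> (\<Sum>t\<in>Bs - Z. 2)"
          using sub unfolding nz_def by (intro sum_mono nz_le) auto
        also have "\<dots> = 2 * card (Bs - Z)" by simp
        also have "card (Bs - Z) \<le> 2"
        proof -
          have "(0, k) \<in> K" using k Z unfolding K_def Z_def
            by (auto simp: matches_def intro!: tile_in)
          then have "card (K - {(0,k)}) \<le> 1" using False fin unfolding K_def by auto
          have "Bs - Z \<subseteq> (K - {(0,k)}) \<union> (Bs \<inter> Sk k)"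
            using sub unfolding K_def Z_def Sk_def by (auto simp: matches_def)
          then have "card (Bs - Z) \<le> card ((K - {(0,k)}) \<union> (Bs \<inter> Sk k))"
            using fin unfolding K_def by (intro card_mono) auto
          also have "\<dots> \<le> card (K - {(0,k)}) + card (Bs \<inter> Sk k)" by (rule card_Un_le)
          finally show ?thesis using \<open>card (K - {(0,k)}) \<le> 1\<close> c1 by simp
        qed
        finally show False using g12 by simp
      qed
    qed
  qed
qed


definition occL :: "nat \<Rightarrow> tile list \<Rightarrow> nat" where
  "occL v B = sum_list (map (cv v) B)"

definition ginv :: "(nat \<Rightarrow> tile set) \<Rightarrow> state \<Rightarrow> bool" where
  "ginv H0 s = (case s of (H, E, B) \<Rightarrow> deal H0 \<and> (\<forall>p\<in>players. H p \<subseteq> H0 p)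
     \<and> (\<Union>p\<in>players. H p) \<union> set B = all_tiles \<and> (\<forall>p\<in>players. H p \<inter> set B = {})
     \<and> distinct B \<and> (case E of None \<Rightarrow> B = []
        | Some (l, r) \<Rightarrow> l \<le> 6 \<and> r \<le> 6 \<and> (\<forall>v. even (occL v B + of_bool (l = v) + of_bool (r = v)))))"

lemma cv_other: "matches t l \<Longrightarrow> cv v t + of_bool (other t l = v) = of_bool (l = v) + 2 * of_bool (other t l = v)"
  by (auto simp: cv_def other_def matches_def)

lemma player_in: "player i \<in> players"
proof -
  have "i mod 4 < 4" by simp
  then have "i mod 4 = 0 \<or> i mod 4 = 1 \<or> i mod 4 = 2 \<or> i mod 4 = 3" by linarith
  then show ?thesis by (auto simp: player_def players_def)
qed

lemma step_inv:
  assumes inv: "ginv H0 (H, E, B)" and lg: "legal p (H, E, B) m" and pp: "p \<in> players"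
  shows "ginv H0 (apply_move p m (H, E, B))"
proof (cases m)
  case Pass
  then show ?thesis using inv by (simp add: apply_move_def)
next
  case (Place t b)
  have tH: "t \<in> H p" using lg Place
    by (auto simp: legal_def split: option.splits if_splits)
  from inv have dl: "deal H0" and sub: "\<forall>p\<in>players. H p \<subseteq> H0 p"
    and un: "(\<Union>p\<in>players. H p) \<union> set B = all_tiles" and dj: "\<forall>p\<in>players. H p \<inter> set B = {}"
    and ds: "distinct B"
    and eE: "case E of None \<Rightarrow> B = []
        | Some (l, r) \<Rightarrow> l \<le> 6 \<and> r \<le> 6 \<and> (\<forall>v. even (occL v B + of_bool (l = v) + of_bool (r = v)))"
    by (auto simp: ginv_def)
  have dj0: "\<forall>q\<in>players. \<forall>q'\<in>players. q \<noteq> q' \<longrightarrow> H0 q \<inter> H0 q' = {}" using dl by (simp add: deal_def)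
  have tall: "t \<in> all_tiles" using un tH pp by blast
  then have t6: "fst t \<le> 6" "snd t \<le> 6" by (auto simp: all_tiles_def)
  have tnB: "t \<notin> set B" using dj tH pp by blast
  have tnq: "t \<notin> H q" if "q \<in> players" "q \<noteq> p" for q
    using dj0 sub that pp tH by blast
  define H' where "H' = H(p := H p - {t})"
  have A: "\<forall>q\<in>players. H' q \<subseteq> H0 q" using sub unfolding H'_def by auto
  have Bu: "(\<Union>q\<in>players. H' q) \<union> set (B @ [t]) = all_tiles"
  proof -
    have "(\<Union>q\<in>players. H' q) \<union> set (B @ [t]) = (\<Union>q\<in>players. H q) \<union> set B"
      using tH pp unfolding H'_def by (auto split: if_splits)
    then show ?thesis using un by simp
  qed
  have C: "\<forall>q\<in>players. H' q \<inter> set (B @ [t]) = {}"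
    using dj tnq unfolding H'_def by auto
  have D: "distinct (B @ [t])" using ds tnB by simp
  have occ_app: "occL v (B @ [t]) = occL v B + cv v t" for v by (simp add: occL_def)
  show ?thesis
  proof (cases E)
    case None
    then have "B = []" using eE by simp
    obtain a c where tac: "t = (a, c)" by (cases t)
    have "even (occL v (B @ [t]) + of_bool (fst t = v) + of_bool (snd t = v))" for v
      using \<open>B = []\<close> by (simp add: occL_def cv_def)
    then have "ginv H0 (H', Some (a, c), B @ [t])" using A Bu C D dl t6
      by (simp add: ginv_def tac)
    then show ?thesis using None Place tac
      by (simp add: apply_move_def H'_def)
  next
    case (Some lr)
    obtain l r where lr: "E = Some (l, r)" using Some by (cases lr) auto
    have l6: "l \<le> 6" "r \<le> 6" and par: "\<forall>v. even (occL v B + of_bool (l = v) + of_bool (r = v))"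
      using eE lr by auto
    have mt: "(b \<longrightarrow> matches t l) \<and> (\<not> b \<longrightarrow> matches t r)" using lg Place lr
      by (auto simp: legal_def split: if_splits)
    have o6: "other t x \<le> 6" for x using t6 by (simp add: other_def)
    show ?thesis
    proof (cases b)
      case True
      have "even (occL v (B @ [t]) + of_bool (other t l = v) + of_bool (r = v))" for v
      proof -
        have "cv v t + of_bool (other t l = v) = of_bool (l = v) + 2 * of_bool (other t l = v)"
          using mt True cv_other by blast
        then show ?thesis using par[rule_format, of v] unfolding occ_app by presburger
      qed
      then show ?thesis using True lr Place A Bu C D dl o6 l6
        by (simp add: apply_move_def ginv_def H'_def)
    next
      case False
      have "even (occL v (B @ [t]) + of_bool (l = v) + of_bool (other t r = v))" for v
      proof -
        have "cv v t + of_bool (other t r = v) = of_bool (r = v) + 2 * of_bool (other t r = v)"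
          using mt False cv_other by blast
        then show ?thesis using par[rule_format, of v] unfolding occ_app by presburger
      qed
      then show ?thesis using False lr Place A Bu C D dl o6 l6
        by (simp add: apply_move_def ginv_def H'_def)
    qed
  qed
qed

lemma run_inv: "ginv H0 s \<Longrightarrow> valid_from i s ms \<Longrightarrow> ginv H0 (run_from i s ms)"
proof (induction ms arbitrary: i s)
  case Nil
  then show ?case by simp
next
  case (Cons m ms)
  obtain H E B where s: "s = (H, E, B)" by (cases s) auto
  have "ginv H0 (apply_move (player i) m s)"
    using Cons.prems s step_inv player_in by simp
  then show ?case using Cons by simp
qed

lemma keep:
  "(\<forall>j<length ms. player (i + j) \<in> T \<longrightarrow> (\<forall>t b. ms ! j \<noteq> Place t b)) \<Longrightarrow> p \<in> T
   \<Longrightarrow> fst (run_from i s ms) p = fst s p"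
proof (induction ms arbitrary: i s)
  case Nil
  then show ?case by simp
next
  case (Cons m ms)
  have h0: "player i \<in> T \<longrightarrow> (\<forall>t b. m \<noteq> Place t b)" using Cons.prems(1) by force
  have h1: "\<forall>j<length ms. player (Suc i + j) \<in> T \<longrightarrow> (\<forall>t b. ms ! j \<noteq> Place t b)"
  proof (intro allI impI)
    fix j t b assume "j < length ms" "player (Suc i + j) \<in> T"
    then show "ms ! j \<noteq> Place t b" using Cons.prems(1) by (metis Suc_less_eq add_Suc_shift length_Cons nth_Cons_Suc)
  qed
  have "fst (apply_move (player i) m s) p = fst s p"
  proof (cases m)
    case Pass
    then show ?thesis by (simp add: apply_move_def split: prod.splits)
  next
    case (Place t b)
    then have "player i \<noteq> p" using h0 Cons.prems(2) by auto
    then show ?thesis using Place by (simp add: apply_move_def split: prod.splits)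
  qed
  then show ?case using Cons.IH[OF h1 Cons.prems(2)] by simp
qed


lemma card_Sk: "k \<in> {1..6} \<Longrightarrow> card (Sk k) = 15"
  unfolding Sk_def card_filt
  by (drule kcases, elim disjE; simp add: L_def matches_def)

lemma card_M: "k \<in> {1..6} \<Longrightarrow> l \<in> {1..6} \<Longrightarrow> l \<noteq> k \<Longrightarrow>
   card {t\<in>all_tiles. \<not> matches t 0 \<and> \<not> matches t k \<and> \<not> matches t l} = 10"
  unfolding card_filt
  by (drule kcases, drule kcases, elim disjE; simp add: L_def matches_def)

lemma cover:
  assumes k: "k \<in> {1..6}" and l: "l \<le> 6" "l \<notin> {0, k}" and U: "U \<subseteq> Sk k" "card U = 14"
  shows "\<exists>t\<in>U. matches t l"
proof (rule ccontr)
  assume "\<not> ?thesis"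
  then have "U \<subseteq> {t\<in>all_tiles. \<not> matches t 0 \<and> \<not> matches t k \<and> \<not> matches t l}"
    using U unfolding Sk_def by auto
  moreover have "l \<in> {1..6}" "l \<noteq> k" using l by auto
  ultimately have "card U \<le> card {t\<in>all_tiles. \<not> matches t 0 \<and> \<not> matches t k \<and> \<not> matches t l}"
    using finite_all by (intro card_mono) auto
  also have "\<dots> = 10" using card_M[OF k] \<open>l \<in> {1..6}\<close> \<open>l \<noteq> k\<close> by blast
  finally have "card U \<le> 10" .
  then show False using U by simp
qed

theorem mainTheorem4:
  fixes H :: "nat \<Rightarrow> tile set" and ms :: "move list" and T :: "nat set" and k :: nat
  assumes "tranca_minima H ms"
    and "losing_team H ms T"
    and "k \<in> {1..6}"
    and "\<forall>p\<in>T. \<forall>t\<in>H p. \<not> matches t 0 \<and> \<not> matches t k"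
  shows "\<exists>i < length ms. player i \<in> T \<and> (\<exists>t b. ms ! i = Place t b)"
proof -
  have dl: "deal H" and vf: "valid_from 0 (init_state H) ms" and bl: "blocked (final_state H ms)"
    and bp: "board_pips (final_state H ms) = 42"
    using assms(1) by (auto simp: tranca_minima_def ends_in_tranca_def complete_game_def)
  have k: "k \<in> {1..6}" by fact
  obtain Hf E B where fs: "final_state H ms = (Hf, E, B)" by (cases "final_state H ms") auto
  have ms0: "ms \<noteq> []"
  proof
    assume "ms = []"
    then have "final_state H ms = (H, None, [])" by (simp add: final_state_def init_state_def)
    then show False using bl by (simp add: blocked_def)
  qed
  have "T \<in> teams" using assms(2) by (simp add: losing_team_def)
  then have "T = {1,3} \<or> T = {2,4}" by (simp add: teams_def)
  then show ?thesis
  proof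
    assume T: "T = {1,3}"
    obtain m ms' where mm: "ms = m # ms'" using ms0 by (cases ms) auto
    have "legal (player 0) (H, None, []) m" using vf mm by (simp add: init_state_def)
    then obtain t b where "m = Place t b" by (auto simp: legal_def)
    then show ?thesis using mm T by (intro exI[of _ 0]) (auto simp: player_def)
  next
    assume T: "T = {2,4}"
    show ?thesis
    proof (rule ccontr)
      assume nc: "\<not> ?thesis"
      have nP: "\<forall>j<length ms. player (0 + j) \<in> T \<longrightarrow> (\<forall>t b. ms ! j \<noteq> Place t b)"
        using nc by auto
      have keepT: "Hf p = H p" if "p \<in> T" for p
        using keep[OF nP that, of "init_state H"] fs by (simp add: final_state_def init_state_def)
      have ginit: "ginv H (init_state H)"
        using dl by (simp add: ginv_def init_state_def deal_def)
      have gf: "ginv H (Hf, E, B)" using run_inv[OF ginit vf] fs by (simp add: final_state_def)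
      obtain l r where E: "E = Some (l, r)" and ncp: "\<forall>p\<in>players. \<not> can_play (Hf p) l r"
        using bl fs by (auto simp: blocked_def)
      have un: "(\<Union>p\<in>players. Hf p) \<union> set B = all_tiles"
        and dj: "\<forall>p\<in>players. Hf p \<inter> set B = {}" and ds: "distinct B"
        and l6: "l \<le> 6" "r \<le> 6" and par: "\<forall>v. even (occL v B + of_bool (l = v) + of_bool (r = v))"
        using gf E by (auto simp: ginv_def)
      have pl: "2 \<in> players" "4 \<in> players" by (auto simp: players_def)
      define U where "U = H 2 \<union> H 4"
      have HU: "H 2 \<subseteq> all_tiles" "H 4 \<subseteq> all_tiles" "card (H 2) = 7" "card (H 4) = 7"
        "H 2 \<inter> H 4 = {}"
      proof -
        have d1: "\<forall>p\<in>players. H p \<subseteq> all_tiles \<and> card (H p) = 7"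
          and d2: "\<forall>p\<in>players. \<forall>q\<in>players. p \<noteq> q \<longrightarrow> H p \<inter> H q = {}"
          using dl unfolding deal_def by blast+
        show "H 2 \<subseteq> all_tiles" "H 4 \<subseteq> all_tiles" "card (H 2) = 7" "card (H 4) = 7"
          using d1 pl by blast+
        show "H 2 \<inter> H 4 = {}" using d2 pl by simp
      qed
      have fin2: "finite (H 2)" "finite (H 4)" using HU finite_all finite_subset by blast+
      have cU: "card U = 14" unfolding U_def using card_Un_disjoint[OF fin2 HU(5)] HU by simp
      have USk: "U \<subseteq> Sk k"
      proof
        fix t assume "t \<in> U"
        then have "t \<in> all_tiles" "\<not> matches t 0 \<and> \<not> matches t k"
          using assms(4) HU(1,2) T unfolding U_def by blast+
        then show "t \<in> Sk k" unfolding Sk_def by blast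
      qed
      have Uf: "U = Hf 2 \<union> Hf 4" using keepT T unfolding U_def by auto
      have nmU: "\<not> (\<exists>t\<in>U. matches t x)" if "x = l \<or> x = r" for x
        using ncp pl that unfolding Uf can_play_def by blast
      have lk: "l \<in> {0,k}"
      proof (rule ccontr)
        assume "l \<notin> {0,k}"
        then obtain t where "t \<in> U" "matches t l" using cover[OF k l6(1) _ USk cU] by blast
        then show False using nmU[of l] by blast
      qed
      have rk: "r \<in> {0,k}"
      proof (rule ccontr)
        assume "r \<notin> {0,k}"
        then obtain t where "t \<in> U" "matches t r" using cover[OF k l6(2) _ USk cU] by blast
        then show False using nmU[of r] by blast
      qed
      have all: "\<forall>t\<in>all_tiles. matches t l \<or> matches t r \<longrightarrow> t \<in> set B"
      proof (intro ballI impI)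
        fix t
        assume tt: "t \<in> all_tiles" "matches t l \<or> matches t r"
        show "t \<in> set B"
        proof (rule ccontr)
          assume "t \<notin> set B"
          then obtain p where "p \<in> players" "t \<in> Hf p" using tt(1) un by blast
          then show False using ncp tt(2) unfolding can_play_def by blast
        qed
      qed
      have subB: "set B \<subseteq> all_tiles" using un by blast
      have BU: "set B \<inter> U = {}" using dj pl unfolding Uf by blast
      have c1: "card (set B \<inter> Sk k) \<le> 1"
      proof -
        have finSk: "finite (Sk k)" unfolding Sk_def using finite_all by (rule rev_finite_subset) blast
        have finU: "finite U" using finSk USk by (rule rev_finite_subset)
        have "set B \<inter> Sk k \<subseteq> Sk k - U" using BU by blast
        moreover have "finite (Sk k - U)" using finSk by (rule finite_Diff)
        ultimately have "card (set B \<inter> Sk k) \<le> card (Sk k - U)"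
          by (intro card_mono)
        also have "\<dots> = 15 - 14" by (simp only: card_Diff_subset[OF finU USk] card_Sk[OF k] cU)
        finally show ?thesis by simp
      qed
      have par': "\<forall>v. even (occ v (set B) + of_bool (l = v) + of_bool (r = v))"
        using par ds by (simp add: occ_def occL_def sum_list_distinct_conv_sum_set)
      have s: "sum pips (set B) = 42"
        using bp fs ds by (simp add: board_pips_def sum_list_distinct_conv_sum_set)
      show False using final_comb[OF k subB lk rk all par' c1 s] .
    qed
  qed
qed

end
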